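(* Let $k \geq 5$ be an integer. If $c$ is a rational number such that $\mathcal{G}[\{C_k\}, c]$ is finite and $\mathcal{G}(\{C_k\}, c)^*$ is infinite (that is, $c = c(C_k)$ exists), then \[c \geq \frac{2}{2k+1}.\]
   Context: Graphs are finite and simple; $C_k$ is the cycle on $k$ vertices. For $D \subseteq V(G)$, $N[D]$ is the union of closed neighbourhoods of vertices of $D$. For a set $\mathcal{F}$ of graphs, $D$ is $\mathcal{F}$-isolating if $G - N[D]$ contains no subgraph isomorphic to a member of $\mathcal{F}$, and $\iota(G,\mathcal{F})$ is the minimum size of such a set. Let $\mathcal{G}$ be the set of connected graphs $G$ with $V(G) = [n]$ for some $n \geq 1$. For real $\alpha > 0$, $\mathcal{G}(\mathcal{F},\alpha) = \{G \in \mathcal{G} : \iota(G,\mathcal{F}) \le \lfloor \alpha|V(G)| \rfloor\}$, $\mathcal{G}(\mathcal{F},\alpha)^* = \{G \in \mathcal{G}(\mathcal{F},\alpha) : \iota(G,\mathcal{F}) = \lfloor \alpha |V(G)|\rfloor\}$, and $\mathcal{G}[\mathcal{F},\alpha] = \mathcal{G} \setminus \mathcal{G}(\mathcal{F},\alpha)$. The number $c(\mathcal{F})$, when it exists, is a rational number such that $\mathcal{G}[\mathcal{F},c(\mathcal{F})]$ is finite and $\mathcal{G}(\mathcal{F},c(\mathcal{F}))^*$ is infinite. *)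

theory Defs
  imports Complex_Main
begin

text \<open>A graph with vertex set [n] = {1..n} is a pair (n, E), E a set of 2-element
  subsets of {1..n}.\<close>
type_synonym graph = "nat \<times> nat set set"

definition verts :: "graph \<Rightarrow> nat set" where
  "verts G = {1..fst G}"

definition edges :: "graph \<Rightarrow> nat set set" where
  "edges G = snd G"

definition simple_graph :: "graph \<Rightarrow> bool" where
  "simple_graph G \<longleftrightarrow> (\<forall>e\<in>edges G. card e = 2 \<and> e \<subseteq> verts G)"

definition adj :: "graph \<Rightarrow> nat \<Rightarrow> nat \<Rightarrow> bool" where
  "adj G u v \<longleftrightarrow> {u, v} \<in> edges G"

definition connected_graph :: "graph \<Rightarrow> bool" where
  "connected_graph G \<longleftrightarrow>
     (\<forall>u\<in>verts G. \<forall>v\<in>verts G. (u, v) \<in> {(x, y). adj G x y}\<^sup>*)"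

definition conn_graphs :: "graph set" where
  "conn_graphs = {G. fst G \<ge> 1 \<and> simple_graph G \<and> connected_graph G}"

definition closed_nbhd :: "graph \<Rightarrow> nat set \<Rightarrow> nat set" where
  "closed_nbhd G D = D \<union> {v \<in> verts G. \<exists>u\<in>D. adj G u v}"

definition subgraph_iso_in :: "graph \<Rightarrow> graph \<Rightarrow> nat set \<Rightarrow> bool" where
  "subgraph_iso_in H G S \<longleftrightarrow>
     (\<exists>f. inj_on f (verts H) \<and> f ` verts H \<subseteq> S \<and>
          (\<forall>a\<in>verts H. \<forall>b\<in>verts H. adj H a b \<longrightarrow> adj G (f a) (f b)))"

definition isolating :: "graph \<Rightarrow> graph set \<Rightarrow> nat set \<Rightarrow> bool" where
  "isolating G F D \<longleftrightarrow> D \<subseteq> verts G \<and>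
     (\<forall>H\<in>F. \<not> subgraph_iso_in H G (verts G - closed_nbhd G D))"

definition iota :: "graph \<Rightarrow> graph set \<Rightarrow> nat" where
  "iota G F = (LEAST m. \<exists>D. isolating G F D \<and> card D = m)"

definition cycle_graph :: "nat \<Rightarrow> graph" where
  "cycle_graph k = (k, {{i, i + 1} | i. 1 \<le> i \<and> i < k} \<union> {{k, 1}})"

definition G_le :: "graph set \<Rightarrow> real \<Rightarrow> graph set" where
  "G_le F \<alpha> = {G \<in> conn_graphs. real (iota G F) \<le> of_int \<lfloor>\<alpha> * real (fst G)\<rfloor>}"

definition G_eq :: "graph set \<Rightarrow> real \<Rightarrow> graph set" where
  "G_eq F \<alpha> = {G \<in> G_le F \<alpha>. real (iota G F) = of_int \<lfloor>\<alpha> * real (fst G)\<rfloor>}"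

definition G_gt :: "graph set \<Rightarrow> real \<Rightarrow> graph set" where
  "G_gt F \<alpha> = conn_graphs - G_le F \<alpha>"

end

theory Submission
  imports Defs
begin

definition gi :: "nat \<Rightarrow> nat \<Rightarrow> nat" where "gi k v = (v - 1) div (2*k+1)"
definition po :: "nat \<Rightarrow> nat \<Rightarrow> nat" where "po k v = (v - 1) mod (2*k+1)"
definition vx :: "nat \<Rightarrow> nat \<Rightarrow> nat \<Rightarrow> nat" where "vx k i p = i*(2*k+1) + p + 1"

definition AA :: "nat \<Rightarrow> nat \<Rightarrow> nat \<Rightarrow> bool" where
 "AA k u v \<longleftrightarrow> (gi k u = gi k v \<and> po k u < 2*k \<and> po k v < 2*k \<and>
     (po k v = Suc (po k u) mod (2*k) \<or> po k v = (po k u + 2) mod (2*k)))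
   \<or> (gi k u = gi k v \<and> po k u = 2*k \<and> po k v = 0)
   \<or> (po k u = 2*k \<and> po k v = 2*k \<and> gi k v = Suc (gi k u))"

definition GG :: "nat \<Rightarrow> nat \<Rightarrow> graph" where
 "GG k m = (m*(2*k+1), {{u,v} | u v. u \<in> {1..m*(2*k+1)} \<and> v \<in> {1..m*(2*k+1)} \<and> AA k u v})"

definition sg :: "nat \<Rightarrow> nat \<Rightarrow> nat" where
  "sg k a = (if 2*(a-1) < k then 2*(a-1) else 2*(k-a)+1)"

lemma vx_gi_po: "p < 2*k+1 \<Longrightarrow> gi k (vx k i p) = i \<and> po k (vx k i p) = p"
proof -
  assume p: "p < 2*k+1"
  have e: "vx k i p - 1 = p + (2*k+1) * i" unfolding vx_def by simp
  have g: "\<And>s::nat. p < s \<Longrightarrow> (p + s*i) div s = i \<and> (p + s*i) mod s = p" by simp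
  show ?thesis unfolding gi_def po_def e using g[OF p] by blast
qed

lemma vx_in: "i < m \<Longrightarrow> p < 2*k+1 \<Longrightarrow> vx k i p \<in> {1..m*(2*k+1)}"
proof -
  assume a: "i < m" "p < 2*k+1"
  have "Suc i * (2*k+1) \<le> m * (2*k+1)" using a by (intro mult_le_mono1) simp
  then show ?thesis using a unfolding vx_def by simp
qed

lemma vx_decomp: "v \<ge> 1 \<Longrightarrow> v = vx k (gi k v) (po k v)"
  unfolding gi_def po_def vx_def by (metis add.commute div_mult_mod_eq le_add_diff_inverse)

lemma po_le: "po k v \<le> 2*k"
  unfolding po_def using less_Suc_eq_le mod_less_divisor by fastforce

lemma verts_GG: "verts (GG k m) = {1..m*(2*k+1)}" by (simp add: verts_def GG_def)

lemma adj_GG: "adj (GG k m) x y \<longleftrightarrow> x \<in> {1..m*(2*k+1)} \<and> y \<in> {1..m*(2*k+1)} \<and> (AA k x y \<or> AA k y x)"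
  unfolding adj_def edges_def GG_def by (auto simp: doubleton_eq_iff)

lemma mod2: "(x::nat) < 2*N \<Longrightarrow> x mod N = (if x < N then x else x - N)"
  by (simp add: le_mod_geq)

lemma AA_irrefl: "k \<ge> 2 \<Longrightarrow> \<not> AA k u u"
proof
  assume k: "k \<ge> 2" and a: "AA k u u"
  have p: "po k u \<le> 2*k" by (rule po_le)
  show False
  proof (cases "po k u < 2*k")
    case True
    then have "Suc (po k u) < 2*(2*k)" "po k u + 2 < 2*(2*k)" using k by auto
    then show ?thesis using a True k unfolding AA_def by (auto simp: mod2 split: if_splits)
  next
    case False
    then show ?thesis using a k unfolding AA_def by auto
  qed
qed

lemma simple_GG: "k \<ge> 2 \<Longrightarrow> simple_graph (GG k m)"
  unfolding simple_graph_def verts_GG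
  by (auto simp: edges_def GG_def AA_irrefl card_insert_if)

lemma gi_lt: "v \<in> {1..m*(2*k+1)} \<Longrightarrow> gi k v < m"
proof -
  assume v: "v \<in> {1..m*(2*k+1)}"
  then have "v - 1 < m * (2*k+1)" by auto
  then show ?thesis unfolding gi_def using less_mult_imp_div_less by blast
qed

lemma conn_GG:
  assumes k: "k \<ge> 2" and m: "m \<ge> 1"
  shows "connected_graph (GG k m)"
proof -
  define E where "E = {(x, y). adj (GG k m) x y}"
  define V where "V = {1..m*(2*k+1)}"
  have symE: "sym E" unfolding E_def sym_def adj_GG by auto
  have h: "i < m \<Longrightarrow> (vx k i (2*k), vx k 0 (2*k)) \<in> E\<^sup>*" for i
  proof (induction i)
    case 0 then show ?case by simp
  next
    case (Suc i)
    have "AA k (vx k i (2*k)) (vx k (Suc i) (2*k))" unfolding AA_def using vx_gi_po[of "2*k" k] by simp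
    then have "(vx k (Suc i) (2*k), vx k i (2*k)) \<in> E" unfolding E_def adj_GG
      using vx_in[of i m "2*k" k] vx_in[of "Suc i" m "2*k" k] Suc.prems by auto
    then show ?case using Suc by (meson Suc_lessD converse_rtrancl_into_rtrancl)
  qed
  have kk: "i < m \<Longrightarrow> p < 2*k \<Longrightarrow> (vx k i p, vx k i (2*k)) \<in> E\<^sup>*" for i p
  proof (induction p)
    case 0
    have "AA k (vx k i (2*k)) (vx k i 0)" unfolding AA_def using vx_gi_po[of "2*k" k] vx_gi_po[of 0 k] by simp
    then have "(vx k i 0, vx k i (2*k)) \<in> E" unfolding E_def adj_GG
      using vx_in[of i m "2*k" k] vx_in[of i m 0 k] 0 by auto
    then show ?case by blast
  next
    case (Suc p)
    have "AA k (vx k i p) (vx k i (Suc p))" unfolding AA_def using vx_gi_po[of p k] vx_gi_po[of "Suc p" k] Suc.prems by simp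
    then have "(vx k i (Suc p), vx k i p) \<in> E" unfolding E_def adj_GG
      using vx_in[of i m p k] vx_in[of i m "Suc p" k] Suc.prems by auto
    then show ?case using Suc by (meson Suc_lessD converse_rtrancl_into_rtrancl)
  qed
  have toh: "v \<in> V \<Longrightarrow> (v, vx k 0 (2*k)) \<in> E\<^sup>*" for v
  proof -
    assume v: "v \<in> V"
    have g: "gi k v < m" using gi_lt v unfolding V_def by blast
    have d: "v = vx k (gi k v) (po k v)" using vx_decomp v unfolding V_def by auto
    show ?thesis
    proof (cases "po k v = 2*k")
      case True then show ?thesis using h[OF g] d by simp
    next
      case False then have "po k v < 2*k" using po_le le_neq_implies_less by blast
      then show ?thesis using kk[OF g] h[OF g] d by (metis rtrancl_trans)
    qed
  qed
  have "sym (E\<^sup>*)" using symE by (rule sym_rtrancl)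
  then show ?thesis unfolding connected_graph_def verts_GG E_def[symmetric] V_def[symmetric]
    using toh by (meson rtrancl_trans symD)
qed

lemma sg_lt: "a \<in> {1..k} \<Longrightarrow> k \<ge> 2 \<Longrightarrow> sg k a < k"
  unfolding sg_def by auto

lemma sg_inj: "inj_on (sg k) {1..k}"
  unfolding inj_on_def sg_def by (auto split: if_splits) presburger+

lemma adj_cyc: "adj (cycle_graph k) a b \<longleftrightarrow> (\<exists>i. 1 \<le> i \<and> i < k \<and> ((a = i \<and> b = i+1) \<or> (a = i+1 \<and> b = i))) \<or> (a = k \<and> b = 1) \<or> (a = 1 \<and> b = k)"
  unfolding adj_def edges_def cycle_graph_def by (auto simp: doubleton_eq_iff)

lemma verts_cyc: "verts (cycle_graph k) = {1..k}" by (simp add: verts_def cycle_graph_def)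

lemma sg_adj:
  assumes "k \<ge> 3" "adj (cycle_graph k) a b"
  shows "sg k b = sg k a + 1 \<or> sg k b = sg k a + 2 \<or> sg k a = sg k b + 1 \<or> sg k a = sg k b + 2"
  using assms unfolding adj_cyc sg_def by (auto split: if_splits)

lemma win:
  assumes k: "k \<ge> 5" and q: "q < 2*k" and j: "j < k" and p: "p = (q+3+j) mod (2*k)"
  shows "p \<noteq> q \<and> p \<noteq> Suc q mod (2*k) \<and> p \<noteq> (q+2) mod (2*k) \<and> q \<noteq> Suc p mod (2*k) \<and> q \<noteq> (p+2) mod (2*k) \<and> p < 2*k"
proof -
  have p': "p = (if q+3+j < 2*k then q+3+j else q+3+j-2*k)" using p mod2[of "q+3+j" "2*k"] q j k by simp
  have a: "Suc q mod (2*k) = (if Suc q < 2*k then Suc q else Suc q - 2*k)" using mod2[of "Suc q" "2*k"] q by simp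
  have b: "(q+2) mod (2*k) = (if q+2 < 2*k then q+2 else q+2 - 2*k)" using mod2[of "q+2" "2*k"] q k by simp
  have pl: "p < 2*k" using p k by simp
  have c: "Suc p mod (2*k) = (if Suc p < 2*k then Suc p else Suc p - 2*k)" using mod2[of "Suc p" "2*k"] pl k by linarith
  have d: "(p+2) mod (2*k) = (if p+2 < 2*k then p+2 else p+2 - 2*k)" using mod2[of "p+2" "2*k"] pl k by linarith
  show ?thesis unfolding a b c d using p' q j k by auto
qed

lemma win_inj:
  assumes k: "k \<ge> 5" and q: "(q::nat) < 2*k" and j: "j1 < k" "j2 < k" and e: "(q+3+j1) mod (2*k) = (q+3+j2) mod (2*k)"
  shows "j1 = j2"
proof -
  have "(q+3+j1) mod (2*k) = (if q+3+j1 < 2*k then q+3+j1 else q+3+j1-2*k)" using mod2[of "q+3+j1" "2*k"] q j k by simp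
  moreover have "(q+3+j2) mod (2*k) = (if q+3+j2 < 2*k then q+3+j2 else q+3+j2-2*k)" using mod2[of "q+3+j2" "2*k"] q j k by simp
  ultimately show ?thesis using e q j k by (auto split: if_splits)
qed

lemma step_mod:
  "((x::nat) + 1) mod N = Suc (x mod N) mod N" "((x::nat) + 2) mod N = (x mod N + 2) mod N"
  by (simp add: mod_Suc_eq) (metis mod_add_left_eq)

lemma key:
  assumes k: "k \<ge> 5" and i: "i < m" and y: "D \<inter> {v \<in> {1..m*(2*k+1)}. gi k v = i} \<subseteq> {y}"
  shows "subgraph_iso_in (cycle_graph k) (GG k m) ({1..m*(2*k+1)} - closed_nbhd (GG k m) D)"
proof -
  define V where "V = {1..m*(2*k+1)}"
  define q where "q = (if po k y < 2*k then po k y else 0)"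
  have q: "q < 2*k" unfolding q_def using k by auto
  define P where "P a = (q + 3 + sg k a) mod (2*k)" for a
  define f where "f a = vx k i (P a)" for a
  have W: "P a \<noteq> q \<and> P a \<noteq> Suc q mod (2*k) \<and> P a \<noteq> (q+2) mod (2*k) \<and> q \<noteq> Suc (P a) mod (2*k)
      \<and> q \<noteq> (P a+2) mod (2*k) \<and> P a < 2*k" if a: "a \<in> {1..k}" for a
    using win[OF k q sg_lt[OF a] P_def] k by linarith
  have gpf: "gi k (f a) = i \<and> po k (f a) = P a" if a: "a \<in> {1..k}" for a
    using W[OF a] vx_gi_po[of "P a" k i] unfolding f_def by simp
  have fV: "f a \<in> V" if a: "a \<in> {1..k}" for a
    using W[OF a] vx_in[OF i, of "P a" k] unfolding f_def V_def by simp
  have inj: "inj_on f {1..k}"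
  proof (rule inj_onI)
    fix a b assume a: "a \<in> {1..k}" and b: "b \<in> {1..k}" and e: "f a = f b"
    then have "P a = P b" using gpf[OF a] gpf[OF b] by metis
    then have "sg k a = sg k b" using win_inj[OF k q sg_lt[OF a] sg_lt[OF b]] k unfolding P_def by simp
    then show "a = b" using sg_inj a b unfolding inj_on_def by blast
  qed
  have notin: "f a \<notin> closed_nbhd (GG k m) D" if a: "a \<in> {1..k}" for a
  proof
    assume "f a \<in> closed_nbhd (GG k m) D"
    then consider "f a \<in> D" | u where "u \<in> D" "adj (GG k m) u (f a)"
      unfolding closed_nbhd_def by blast
    then show False
    proof cases
      case 1
      then have "f a = y" using y fV[OF a] gpf[OF a] unfolding V_def by blast
      then show False using W[OF a] gpf[OF a] unfolding q_def by auto
    next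
      case 2
      then have uV: "u \<in> V" and ad: "AA k u (f a) \<or> AA k (f a) u" unfolding adj_GG V_def by auto
      have pa: "po k (f a) < 2*k" using W[OF a] gpf[OF a] by simp
      have gu: "gi k u = i" using ad pa gpf[OF a] unfolding AA_def by auto
      then have uy: "u = y" using y uV 2 unfolding V_def by blast
      have "po k y \<le> 2*k" by (rule po_le)
      then show False
      proof (cases "po k y = 2*k")
        case True
        then have "q = 0" unfolding q_def by simp
        moreover have "P a = 0" using ad uy True pa gpf[OF a] unfolding AA_def by auto
        ultimately show False using W[OF a] by simp
      next
        case False
        then have qq: "q = po k y" "po k y < 2*k" unfolding q_def using \<open>po k y \<le> 2*k\<close> by auto
        show False using ad uy qq pa gpf[OF a] W[OF a] gu unfolding AA_def by auto
      qed
    qed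
  qed
  have adjf: "adj (GG k m) (f a) (f b)" if a: "a \<in> {1..k}" and b: "b \<in> {1..k}" and ab: "adj (cycle_graph k) a b" for a b
  proof -
    have s: "sg k b = sg k a + 1 \<or> sg k b = sg k a + 2 \<or> sg k a = sg k b + 1 \<or> sg k a = sg k b + 2"
      using sg_adj[OF _ ab] k by simp
    have "AA k (f a) (f b) \<or> AA k (f b) (f a)"
    proof -
      have pa: "P a < 2*k" "P b < 2*k" using W[OF a] W[OF b] by auto
      from s consider "P b = Suc (P a) mod (2*k)" | "P b = (P a + 2) mod (2*k)"
        | "P a = Suc (P b) mod (2*k)" | "P a = (P b + 2) mod (2*k)"
        unfolding P_def by (metis add.assoc step_mod)
      then show ?thesis unfolding AA_def using gpf[OF a] gpf[OF b] pa by cases auto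
    qed
    then show ?thesis unfolding adj_GG using fV[OF a] fV[OF b] unfolding V_def by auto
  qed
  show ?thesis unfolding subgraph_iso_in_def verts_cyc verts_GG
    using inj fV notin adjf unfolding V_def by (intro exI[of _ f]) blast
qed

lemma card_lb:
  assumes k: "k \<ge> 5" and iso: "isolating (GG k m) {cycle_graph k} D"
  shows "card D \<ge> 2*m"
proof -
  define V where "V = {1..m*(2*k+1)}"
  define H where "H i = D \<inter> {v \<in> V. gi k v = i}" for i
  have DV: "D \<subseteq> V" using iso unfolding isolating_def verts_GG V_def by simp
  have fin: "finite D" using DV finite_subset unfolding V_def by blast
  have two: "card (H i) \<ge> 2" if i: "i < m" for i
  proof (rule ccontr)
    assume "\<not> card (H i) \<ge> 2"
    then have "card (H i) \<le> Suc 0" by simp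
    moreover have "finite (H i)" using fin unfolding H_def by simp
    ultimately have "\<forall>a\<in>H i. \<forall>b\<in>H i. a = b" using card_le_Suc0_iff_eq by blast
    then obtain y where "H i \<subseteq> {y}" by blast
    then have "subgraph_iso_in (cycle_graph k) (GG k m) (V - closed_nbhd (GG k m) D)"
      using key[OF k i] unfolding H_def V_def by blast
    then show False using iso unfolding isolating_def verts_GG V_def by blast
  qed
  have U: "D = (\<Union>i\<in>{..<m}. H i)" unfolding H_def using DV gi_lt unfolding V_def by auto
  have "card D = (\<Sum>i\<in>{..<m}. card (H i))"
    unfolding U by (rule card_UN_disjoint) (use fin in \<open>auto simp: H_def\<close>)
  also have "\<dots> \<ge> (\<Sum>i\<in>{..<m}. 2)" by (rule sum_mono) (use two in auto)
  finally show ?thesis by simp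
qed

lemma iota_lb:
  assumes k: "k \<ge> 5"
  shows "iota (GG k m) {cycle_graph k} \<ge> 2*m"
proof -
  define P where "P n = (\<exists>D. isolating (GG k m) {cycle_graph k} D \<and> card D = n)" for n
  have "isolating (GG k m) {cycle_graph k} (verts (GG k m))"
  proof -
    have "verts (GG k m) - closed_nbhd (GG k m) (verts (GG k m)) = {}" unfolding closed_nbhd_def by auto
    moreover have "(1::nat) \<in> verts (cycle_graph k)" using k by (simp add: verts_cyc)
    ultimately show ?thesis unfolding isolating_def subgraph_iso_in_def by auto
  qed
  then have "P (card (verts (GG k m)))" unfolding P_def by blast
  then have "P (iota (GG k m) {cycle_graph k})" unfolding iota_def P_def[symmetric] by (rule LeastI)
  then show ?thesis unfolding P_def using card_lb[OF k] by metis
qed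

theorem proposition2:
  fixes k :: nat and c :: real
  assumes "k \<ge> 5"
    and "c \<in> \<rat>" and "c > 0"
    and "finite (G_gt {cycle_graph k} c)"
    and "infinite (G_eq {cycle_graph k} c)"
  shows "c \<ge> 2 / (2 * real k + 1)"
proof (rule ccontr)
  assume "\<not> c \<ge> 2 / (2 * real k + 1)"
  then have c: "c * (2 * real k + 1) < 2" by (simp add: field_simps)
  have k: "k \<ge> 5" by (rule assms(1))
  have mem: "GG k m \<in> G_gt {cycle_graph k} c" if m: "m \<ge> 1" for m
  proof -
    have "GG k m \<in> conn_graphs" unfolding conn_graphs_def
      using simple_GG[of k m] conn_GG[of k m] m k by (simp add: GG_def)
    moreover have "\<not> real (iota (GG k m) {cycle_graph k}) \<le> of_int \<lfloor>c * real (fst (GG k m))\<rfloor>"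
    proof -
      have "of_int \<lfloor>c * real (fst (GG k m))\<rfloor> \<le> c * real (fst (GG k m))" by (rule of_int_floor_le)
      also have "\<dots> = real m * (c * (2 * real k + 1))" by (simp add: GG_def algebra_simps)
      also have "\<dots> < real m * 2" using c m by simp
      also have "\<dots> \<le> real (iota (GG k m) {cycle_graph k})" using iota_lb[OF k, of m] by linarith
      finally show ?thesis by simp
    qed
    ultimately show ?thesis unfolding G_gt_def G_le_def by auto
  qed
  have inj: "inj_on (GG k) {1..}"
  proof (rule inj_onI)
    fix x y assume "GG k x = GG k y"
    then have "fst (GG k x) = fst (GG k y)" by simp
    then have "x * (2*k+1) = y * (2*k+1)" by (simp add: GG_def)
    then show "x = y" using mult_right_cancel[of "2*k+1" x y] by linarith
  qed
  have "GG k ` {1..} \<subseteq> G_gt {cycle_graph k} c" using mem by auto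
  then have "finite (GG k ` {1..})" using assms(4) finite_subset by blast
  then have "finite {1::nat..}" using finite_imageD inj by blast
  then show False using infinite_Ici[of "1::nat"] by blast
qed

end
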